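(* Let $\mathbf C$ be a category of coframes. The forgetful functor $|\_|:\mathbf C^{\mathrm{adh}}\to\mathbf C$ is topological: every sink $(\varphi_i:|L_i|\to L)_{i\in I}$ of $\mathbf C$-morphisms, with each $L_i$ an adherence $\mathbf C$-object, has a unique final lift, namely $(L,\nu_L)$ where $$\nu_L(\ell)=\bigwedge_{\substack{n\in\mathbb N,\ a_1,\dots,a_n\in\mathcal C_L\\ \ell\le\bigvee_{j=1}^n a_j}}\ \bigvee_{j=1}^n\ \bigwedge_{i\in I}\varphi_i\big(\nu_{L_i}(\varphi_{i!}(a_j))\big).$$
   Context: A category of coframes has coframes as objects and coframe morphisms (preserving arbitrary infima and finite suprema); each coframe morphism $\varphi$ has a left adjoint $\varphi_!$. $\mathcal C_L$ is the set of complemented elements of $L$. An adherence structure on $L$ is a monotone $\nu:L\to L$ preserving finite suprema of complemented elements with $\nu(\ell)=\bigwedge\{\nu(a):a\in\mathcal C_L,a\ge\ell\}$. An adherence $\mathbf C$-object is $(L,\nu_L)$ with $\nu_L$ an adherence structure; $\mathbf C^{\mathrm{adh}}$ has as morphisms the $\mathbf C$-morphisms $\varphi:L\to L'$ that are continuous: $\nu_{L'}(\ell')\le\varphi(\nu_L(\varphi_!(\ell')))$ for all $\ell'\in L'$. $|\_|$ sends $(L,\nu_L)$ to $L$. A lift of the sink is an adherence structure on $L$ making every $\varphi_i$ continuous; it is final if for every $\mathbf C$-morphism $\psi:L\to|L'|$ with $L'$ an adherence $\mathbf C$-object, $\psi$ is continuous iff every $\psi\circ\varphi_i$ is continuous.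 *)

theory Defs
  imports Main
begin

text \<open>A (potential) coframe is represented explicitly by a carrier set and an order
  relation on it, so that coframes with different carriers can live in one ambient type.\<close>

record 'a lat = elems :: "'a set" leq :: "'a \<Rightarrow> 'a \<Rightarrow> bool"

definition is_glb :: "'a lat \<Rightarrow> 'a set \<Rightarrow> 'a \<Rightarrow> bool" where
  "is_glb L S x \<longleftrightarrow> x \<in> elems L \<and> (\<forall>s\<in>S. leq L x s)
     \<and> (\<forall>y\<in>elems L. (\<forall>s\<in>S. leq L y s) \<longrightarrow> leq L y x)"

definition is_lub :: "'a lat \<Rightarrow> 'a set \<Rightarrow> 'a \<Rightarrow> bool" where
  "is_lub L S x \<longleftrightarrow> x \<in> elems L \<and> (\<forall>s\<in>S. leq L s x)
     \<and> (\<forall>y\<in>elems L. (\<forall>s\<in>S. leq L s y) \<longrightarrow> leq L x y)"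

definition Meet :: "'a lat \<Rightarrow> 'a set \<Rightarrow> 'a" where
  "Meet L S = (THE x. is_glb L S x)"

definition Join :: "'a lat \<Rightarrow> 'a set \<Rightarrow> 'a" where
  "Join L S = (THE x. is_lub L S x)"

definition coframe :: "'a lat \<Rightarrow> bool" where
  "coframe L \<longleftrightarrow>
     (\<forall>x\<in>elems L. leq L x x)
   \<and> (\<forall>x\<in>elems L. \<forall>y\<in>elems L. leq L x y \<and> leq L y x \<longrightarrow> x = y)
   \<and> (\<forall>x\<in>elems L. \<forall>y\<in>elems L. \<forall>z\<in>elems L. leq L x y \<and> leq L y z \<longrightarrow> leq L x z)
   \<and> (\<forall>S. S \<subseteq> elems L \<longrightarrow> (\<exists>x. is_glb L S x) \<and> (\<exists>x. is_lub L S x))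
   \<and> (\<forall>a\<in>elems L. \<forall>S. S \<subseteq> elems L \<longrightarrow>
        Join L {a, Meet L S} = Meet L ((\<lambda>s. Join L {a, s}) ` S))"

definition coframe_hom :: "'a lat \<Rightarrow> 'a lat \<Rightarrow> ('a \<Rightarrow> 'a) \<Rightarrow> bool" where
  "coframe_hom L L' f \<longleftrightarrow> coframe L \<and> coframe L' \<and> f ` elems L \<subseteq> elems L'
   \<and> (\<forall>S. S \<subseteq> elems L \<longrightarrow> f (Meet L S) = Meet L' (f ` S))
   \<and> (\<forall>S. S \<subseteq> elems L \<longrightarrow> finite S \<longrightarrow> f (Join L S) = Join L' (f ` S))"

definition ladj :: "'a lat \<Rightarrow> 'a lat \<Rightarrow> ('a \<Rightarrow> 'a) \<Rightarrow> 'a \<Rightarrow> 'a" where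
  "ladj L L' f l' = Meet L {l \<in> elems L. leq L' l' (f l)}"

definition compl_elems :: "'a lat \<Rightarrow> 'a set" where
  "compl_elems L = {a \<in> elems L. \<exists>b\<in>elems L.
      Meet L {a, b} = Join L {} \<and> Join L {a, b} = Meet L {}}"

definition adherence :: "'a lat \<Rightarrow> ('a \<Rightarrow> 'a) \<Rightarrow> bool" where
  "adherence L \<nu> \<longleftrightarrow> \<nu> ` elems L \<subseteq> elems L
   \<and> (\<forall>x\<in>elems L. \<forall>y\<in>elems L. leq L x y \<longrightarrow> leq L (\<nu> x) (\<nu> y))
   \<and> (\<forall>S. S \<subseteq> compl_elems L \<longrightarrow> finite S \<longrightarrow> \<nu> (Join L S) = Join L (\<nu> ` S))
   \<and> (\<forall>l\<in>elems L. \<nu> l = Meet L (\<nu> ` {a \<in> compl_elems L. leq L l a}))"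

definition continuous_adh :: "'a lat \<Rightarrow> ('a \<Rightarrow> 'a) \<Rightarrow> 'a lat \<Rightarrow> ('a \<Rightarrow> 'a) \<Rightarrow> ('a \<Rightarrow> 'a) \<Rightarrow> bool" where
  "continuous_adh L \<nu> L' \<nu>' f \<longleftrightarrow>
     (\<forall>l'\<in>elems L'. leq L' (\<nu>' l') (f (\<nu> (ladj L L' f l'))))"

definition coframe_category :: "'a lat set \<Rightarrow> ('a lat \<Rightarrow> 'a lat \<Rightarrow> ('a \<Rightarrow> 'a) \<Rightarrow> bool) \<Rightarrow> bool" where
  "coframe_category Ob Hom \<longleftrightarrow>
     (\<forall>L\<in>Ob. coframe L)
   \<and> (\<forall>L L' f. Hom L L' f \<longrightarrow> L \<in> Ob \<and> L' \<in> Ob \<and> coframe_hom L L' f)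
   \<and> (\<forall>L\<in>Ob. Hom L L id)
   \<and> (\<forall>L M N f g. Hom L M f \<longrightarrow> Hom M N g \<longrightarrow> Hom L N (g \<circ> f))"

definition is_lift :: "'i set \<Rightarrow> ('i \<Rightarrow> 'a lat) \<Rightarrow> ('i \<Rightarrow> 'a \<Rightarrow> 'a) \<Rightarrow> ('i \<Rightarrow> 'a \<Rightarrow> 'a)
                       \<Rightarrow> 'a lat \<Rightarrow> ('a \<Rightarrow> 'a) \<Rightarrow> bool" where
  "is_lift I Ls \<nu>s \<phi> L \<nu> \<longleftrightarrow> adherence L \<nu> \<and>
     (\<forall>i\<in>I. continuous_adh (Ls i) (\<nu>s i) L \<nu> (\<phi> i))"

definition is_final_lift :: "'a lat set \<Rightarrow> ('a lat \<Rightarrow> 'a lat \<Rightarrow> ('a \<Rightarrow> 'a) \<Rightarrow> bool)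
     \<Rightarrow> 'i set \<Rightarrow> ('i \<Rightarrow> 'a lat) \<Rightarrow> ('i \<Rightarrow> 'a \<Rightarrow> 'a) \<Rightarrow> ('i \<Rightarrow> 'a \<Rightarrow> 'a)
     \<Rightarrow> 'a lat \<Rightarrow> ('a \<Rightarrow> 'a) \<Rightarrow> bool" where
  "is_final_lift Ob Hom I Ls \<nu>s \<phi> L \<nu> \<longleftrightarrow> is_lift I Ls \<nu>s \<phi> L \<nu> \<and>
     (\<forall>L'\<in>Ob. \<forall>\<nu>'. adherence L' \<nu>' \<longrightarrow> (\<forall>\<psi>. Hom L L' \<psi> \<longrightarrow>
        (continuous_adh L \<nu> L' \<nu>' \<psi> \<longleftrightarrow>
         (\<forall>i\<in>I. continuous_adh (Ls i) (\<nu>s i) L' \<nu>' (\<psi> \<circ> \<phi> i)))))"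

text \<open>The candidate adherence structure of the theorem; the finite families
  \<open>a\<^sub>1,\<dots>,a\<^sub>n\<close> of complemented elements are represented by finite sets.\<close>
definition sink_adh :: "'i set \<Rightarrow> ('i \<Rightarrow> 'a lat) \<Rightarrow> ('i \<Rightarrow> 'a \<Rightarrow> 'a) \<Rightarrow> ('i \<Rightarrow> 'a \<Rightarrow> 'a)
                       \<Rightarrow> 'a lat \<Rightarrow> 'a \<Rightarrow> 'a" where
  "sink_adh I Ls \<nu>s \<phi> L l = Meet L
     { Join L ((\<lambda>a. Meet L ((\<lambda>i. \<phi> i (\<nu>s i (ladj (Ls i) L (\<phi> i) a))) ` I)) ` S)
       | S. finite S \<and> S \<subseteq> compl_elems L \<and> leq L l (Join L S) }"

end

theory Submission
  imports Defs
begin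

locale cf = fixes L :: "'a lat" assumes cf: "coframe L"
begin

abbreviation le (infix "\<sqsubseteq>" 50) where "x \<sqsubseteq> y \<equiv> leq L x y"
abbreviation E where "E \<equiv> elems L"

lemma P1: "\<forall>x\<in>E. x \<sqsubseteq> x" using cf[unfolded coframe_def, THEN conjunct1] .
lemma P2: "\<forall>x\<in>E. \<forall>y\<in>E. x \<sqsubseteq> y \<and> y \<sqsubseteq> x \<longrightarrow> x = y"
  using cf[unfolded coframe_def, THEN conjunct2, THEN conjunct1] .
lemma P3: "\<forall>x\<in>E. \<forall>y\<in>E. \<forall>z\<in>E. x \<sqsubseteq> y \<and> y \<sqsubseteq> z \<longrightarrow> x \<sqsubseteq> z"
  using cf[unfolded coframe_def, THEN conjunct2, THEN conjunct2, THEN conjunct1] .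
lemma P4: "\<forall>S. S \<subseteq> E \<longrightarrow> (\<exists>x. is_glb L S x) \<and> (\<exists>x. is_lub L S x)"
  using cf[unfolded coframe_def, THEN conjunct2, THEN conjunct2, THEN conjunct2, THEN conjunct1] .
lemma P5: "\<forall>a\<in>E. \<forall>S. S \<subseteq> E \<longrightarrow> Join L {a, Meet L S} = Meet L ((\<lambda>s. Join L {a, s}) ` S)"
  using cf[unfolded coframe_def, THEN conjunct2, THEN conjunct2, THEN conjunct2, THEN conjunct2] .

lemma refl: "x \<in> E \<Longrightarrow> x \<sqsubseteq> x" using P1 by blast
lemma antisym: "x \<in> E \<Longrightarrow> y \<in> E \<Longrightarrow> x \<sqsubseteq> y \<Longrightarrow> y \<sqsubseteq> x \<Longrightarrow> x = y"
  using P2 by blast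
lemma trans: "x \<in> E \<Longrightarrow> y \<in> E \<Longrightarrow> z \<in> E \<Longrightarrow> x \<sqsubseteq> y \<Longrightarrow> y \<sqsubseteq> z \<Longrightarrow> x \<sqsubseteq> z"
  using P3 by blast

lemma Meet_glb: assumes "S \<subseteq> E" shows "is_glb L S (Meet L S)"
proof -
  obtain x where x: "is_glb L S x" using P4 assms by blast
  have "\<And>y. is_glb L S y \<Longrightarrow> y = x" using x antisym unfolding is_glb_def by blast
  then show ?thesis unfolding Meet_def using x by (metis theI)
qed

lemma Join_lub: assumes "S \<subseteq> E" shows "is_lub L S (Join L S)"
proof -
  obtain x where x: "is_lub L S x" using P4 assms by blast
  have "\<And>y. is_lub L S y \<Longrightarrow> y = x" using x antisym unfolding is_lub_def by blast
  then show ?thesis unfolding Join_def using x by (metis theI)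
qed

lemma Meet_in: "S \<subseteq> E \<Longrightarrow> Meet L S \<in> E" using Meet_glb unfolding is_glb_def by blast
lemma Meet_lower: "S \<subseteq> E \<Longrightarrow> s \<in> S \<Longrightarrow> Meet L S \<sqsubseteq> s" using Meet_glb unfolding is_glb_def by blast
lemma Meet_greatest: "S \<subseteq> E \<Longrightarrow> y \<in> E \<Longrightarrow> (\<And>s. s \<in> S \<Longrightarrow> y \<sqsubseteq> s) \<Longrightarrow> y \<sqsubseteq> Meet L S"
  using Meet_glb unfolding is_glb_def by blast
lemma Join_in: "S \<subseteq> E \<Longrightarrow> Join L S \<in> E" using Join_lub unfolding is_lub_def by blast
lemma Join_upper: "S \<subseteq> E \<Longrightarrow> s \<in> S \<Longrightarrow> s \<sqsubseteq> Join L S" using Join_lub unfolding is_lub_def by blast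
lemma Join_least: "S \<subseteq> E \<Longrightarrow> y \<in> E \<Longrightarrow> (\<And>s. s \<in> S \<Longrightarrow> s \<sqsubseteq> y) \<Longrightarrow> Join L S \<sqsubseteq> y"
  using Join_lub unfolding is_lub_def by blast

lemma distrib: "a \<in> E \<Longrightarrow> S \<subseteq> E \<Longrightarrow> Join L {a, Meet L S} = Meet L ((\<lambda>s. Join L {a, s}) ` S)"
  using P5 by blast

abbreviation bot where "bot \<equiv> Join L {}"
abbreviation top where "top \<equiv> Meet L {}"
lemma bot_in: "bot \<in> E" by (simp add: Join_in)
lemma top_in: "top \<in> E" by (simp add: Meet_in)
lemma bot_least: "x \<in> E \<Longrightarrow> bot \<sqsubseteq> x" by (rule Join_least) auto
lemma top_greatest: "x \<in> E \<Longrightarrow> x \<sqsubseteq> top" by (rule Meet_greatest) auto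

lemma Join2_in: "x \<in> E \<Longrightarrow> y \<in> E \<Longrightarrow> Join L {x,y} \<in> E" by (simp add: Join_in)
lemma Meet2_in: "x \<in> E \<Longrightarrow> y \<in> E \<Longrightarrow> Meet L {x,y} \<in> E" by (simp add: Meet_in)
lemma Join2_u1: "x \<in> E \<Longrightarrow> y \<in> E \<Longrightarrow> x \<sqsubseteq> Join L {x,y}" by (simp add: Join_upper)
lemma Join2_u2: "x \<in> E \<Longrightarrow> y \<in> E \<Longrightarrow> y \<sqsubseteq> Join L {x,y}" by (simp add: Join_upper)
lemma Meet2_l1: "x \<in> E \<Longrightarrow> y \<in> E \<Longrightarrow> Meet L {x,y} \<sqsubseteq> x" by (simp add: Meet_lower)
lemma Meet2_l2: "x \<in> E \<Longrightarrow> y \<in> E \<Longrightarrow> Meet L {x,y} \<sqsubseteq> y" by (simp add: Meet_lower)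
lemma Join2_least: "x \<in> E \<Longrightarrow> y \<in> E \<Longrightarrow> z \<in> E \<Longrightarrow> x \<sqsubseteq> z \<Longrightarrow> y \<sqsubseteq> z \<Longrightarrow> Join L {x,y} \<sqsubseteq> z"
  by (rule Join_least) auto
lemma Meet2_greatest: "x \<in> E \<Longrightarrow> y \<in> E \<Longrightarrow> z \<in> E \<Longrightarrow> z \<sqsubseteq> x \<Longrightarrow> z \<sqsubseteq> y \<Longrightarrow> z \<sqsubseteq> Meet L {x,y}"
  by (rule Meet_greatest) auto

lemma Join_single: "x \<in> E \<Longrightarrow> Join L {x} = x"
  by (rule antisym) (auto intro: Join_in Join_least Join_upper refl)

lemma Join_mono_set: "S \<subseteq> T \<Longrightarrow> T \<subseteq> E \<Longrightarrow> Join L S \<sqsubseteq> Join L T"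
  by (rule Join_least) (auto intro: Join_in Join_upper)

lemma Join_insert: assumes "x \<in> E" "T \<subseteq> E" shows "Join L (insert x T) = Join L {x, Join L T}"
proof (rule antisym)
  show "Join L (insert x T) \<sqsubseteq> Join L {x, Join L T}"
  proof (rule Join_least)
    fix s assume "s \<in> insert x T"
    then show "s \<sqsubseteq> Join L {x, Join L T}"
    proof
      assume "s = x" then show ?thesis using assms by (simp add: Join2_u1 Join_in)
    next
      assume s: "s \<in> T"
      have "s \<sqsubseteq> Join L T" using s assms by (simp add: Join_upper)
      moreover have "Join L T \<sqsubseteq> Join L {x, Join L T}" using assms by (simp add: Join2_u2 Join_in)
      ultimately show ?thesis using assms s by (meson Join2_in Join_in subsetD local.trans)
    qed
  qed (use assms in \<open>auto intro: Join_in Join2_in\<close>)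
  show "Join L {x, Join L T} \<sqsubseteq> Join L (insert x T)"
    apply (rule Join2_least) using assms by (auto intro: Join_in Join_upper Join_mono_set)
qed (use assms in \<open>auto intro: Join_in Join2_in\<close>)

lemma Meet2_eq: "x \<in> E \<Longrightarrow> y \<in> E \<Longrightarrow> x \<sqsubseteq> y \<Longrightarrow> Meet L {x,y} = x"
  by (rule antisym) (auto intro: Meet2_in Meet2_l1 Meet2_greatest refl)
lemma Join2_eq: "x \<in> E \<Longrightarrow> y \<in> E \<Longrightarrow> y \<sqsubseteq> x \<Longrightarrow> Join L {x,y} = x"
  by (rule antisym) (auto intro: Join2_in Join2_u1 Join2_least refl)

lemma compl_sub: "compl_elems L \<subseteq> E" unfolding compl_elems_def by auto

lemma bot_compl: "bot \<in> compl_elems L"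
  unfolding compl_elems_def
  apply (auto intro!: bexI[of _ top] bot_in top_in)
  apply (metis bot_in top_in bot_least Meet2_eq)
  by (metis bot_in top_in top_greatest Join2_eq insert_commute)

lemma compl_join2: assumes "a \<in> compl_elems L" "b \<in> compl_elems L"
  shows "Join L {a,b} \<in> compl_elems L"
proof -
  obtain a' where a: "a \<in> E" "a' \<in> E" "Meet L {a,a'} = bot" "Join L {a,a'} = top"
    using assms(1) unfolding compl_elems_def by auto
  obtain b' where b: "b \<in> E" "b' \<in> E" "Meet L {b,b'} = bot" "Join L {b,b'} = top"
    using assms(2) unfolding compl_elems_def by auto
  define J where "J = Join L {a,b}"
  define M where "M = Meet L {a',b'}"
  have J: "J \<in> E" and M: "M \<in> E" using a b by (auto simp: J_def M_def Join2_in Meet2_in)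
  have "top \<sqsubseteq> Join L {J, M}"
  proof -
    have "Join L {J, M} = Meet L ((\<lambda>s. Join L {J, s}) ` {a',b'})"
      unfolding M_def using a b J by (simp add: distrib)
    moreover have "top \<sqsubseteq> Join L {J, s}" if "s \<in> {a',b'}" for s
    proof -
      have s: "s \<in> E" using that a b by auto
      have "a \<sqsubseteq> J" "b \<sqsubseteq> J" using a b by (auto simp: J_def Join2_u1 Join2_u2)
      then have "a \<sqsubseteq> Join L {J, s}" "b \<sqsubseteq> Join L {J, s}"
        using J s a b by (meson Join2_in Join2_u1 local.trans)+
      moreover have "s \<sqsubseteq> Join L {J, s}" using J s by (simp add: Join2_u2)
      have "Join L {a,a'} \<sqsubseteq> Join L {J, s}" if "s = a'"
        using calculation that J s a b Join2_u2[OF J s] by (intro Join2_least Join2_in) auto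
      moreover have "Join L {b,b'} \<sqsubseteq> Join L {J, s}" if "s = b'"
        using calculation that J s a b Join2_u2[OF J s] by (intro Join2_least Join2_in) auto
      ultimately show ?thesis using \<open>s \<in> {a',b'}\<close> a b by auto
    qed
    ultimately show ?thesis using a b J top_in
      by (auto intro!: Meet_greatest Join2_in)
  qed
  then have top: "Join L {J, M} = top" using J M top_in by (meson Join2_in antisym top_greatest)
  define z where "z = Meet L {J, M}"
  have z: "z \<in> E" using J M by (simp add: z_def Meet2_in)
  have zJ: "z \<sqsubseteq> J" and zM: "z \<sqsubseteq> M" using J M by (auto simp: z_def Meet2_l1 Meet2_l2)
  have za': "z \<sqsubseteq> a'" and zb': "z \<sqsubseteq> b'" using zM z M a b unfolding M_def
    by (meson Meet2_in Meet2_l1 Meet2_l2 local.trans)+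
  have "b = Join L {b, Meet L {a,a'}}" using a b Join2_eq[OF b(1) bot_in bot_least[OF b(1)]] by simp
  also have "\<dots> = Meet L {Join L {b,a}, Join L {b,a'}}" using distrib[OF b(1), of "{a,a'}"] a by simp
  finally have bb: "b = Meet L {Join L {b,a}, Join L {b,a'}}" .
  have "z \<sqsubseteq> Join L {b,a}" using zJ unfolding J_def by (simp add: insert_commute)
  moreover have "z \<sqsubseteq> Join L {b,a'}" using za' z a b by (meson Join2_in Join2_u2 local.trans)
  ultimately have "z \<sqsubseteq> b" using bb z a b by (metis Join2_in Meet2_greatest)
  then have "z \<sqsubseteq> bot" using zb' b z by (metis Meet2_greatest)
  then have bot: "z = bot" using z bot_in bot_least antisym by blast
  show ?thesis unfolding compl_elems_def using J M top bot z_def J_def by auto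
qed

lemma compl_Join: "finite S \<Longrightarrow> S \<subseteq> compl_elems L \<Longrightarrow> Join L S \<in> compl_elems L"
proof (induction S rule: finite_induct)
  case empty then show ?case by (simp add: bot_compl)
  next
  case (insert x F)
  have "Join L (insert x F) = Join L {x, Join L F}"
    using insert compl_sub by (intro Join_insert) auto
  then show ?case using insert compl_join2 by simp
qed

end

definition NN :: "'a lat \<Rightarrow> ('a \<Rightarrow> 'a) \<Rightarrow> 'a \<Rightarrow> 'a" where
  "NN L \<mu> l = Meet L {Join L (\<mu> ` S) | S. finite S \<and> S \<subseteq> compl_elems L \<and> leq L l (Join L S)}"

context cf begin

context fixes \<mu> :: "'a \<Rightarrow> 'a" assumes mu: "\<And>a. \<mu> a \<in> E"
begin

lemma Xs_sub: "{Join L (\<mu> ` S) | S. finite S \<and> S \<subseteq> compl_elems L \<and> leq L l (Join L S)} \<subseteq> E"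
  using mu by (auto intro!: Join_in)

lemma NN_in: "NN L \<mu> l \<in> E" unfolding NN_def using Xs_sub by (rule Meet_in)

lemma NN_le: "finite S \<Longrightarrow> S \<subseteq> compl_elems L \<Longrightarrow> l \<sqsubseteq> Join L S \<Longrightarrow> NN L \<mu> l \<sqsubseteq> Join L (\<mu> ` S)"
  unfolding NN_def by (rule Meet_lower[OF Xs_sub]) auto

lemma NN_greatest: "y \<in> E \<Longrightarrow> (\<And>S. finite S \<Longrightarrow> S \<subseteq> compl_elems L \<Longrightarrow> l \<sqsubseteq> Join L S \<Longrightarrow> y \<sqsubseteq> Join L (\<mu> ` S))
   \<Longrightarrow> y \<sqsubseteq> NN L \<mu> l"
  unfolding NN_def by (rule Meet_greatest[OF Xs_sub]) auto

lemma NN_mono: assumes "x \<in> E" "y \<in> E" "x \<sqsubseteq> y" shows "NN L \<mu> x \<sqsubseteq> NN L \<mu> y"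
proof (rule NN_greatest[OF NN_in])
  fix S assume S: "finite S" "S \<subseteq> compl_elems L" "y \<sqsubseteq> Join L S"
  then have "x \<sqsubseteq> Join L S" using assms compl_sub by (meson Join_in dual_order.trans local.trans)
  then show "NN L \<mu> x \<sqsubseteq> Join L (\<mu> ` S)" using S by (intro NN_le)
qed

lemma NN_bot: "NN L \<mu> bot = bot"
proof -
  have "NN L \<mu> bot \<sqsubseteq> Join L (\<mu> ` {})" by (rule NN_le) (auto intro: refl bot_in)
  then show ?thesis using NN_in bot_in bot_least antisym by auto
qed

lemma NN_join2: assumes a: "a \<in> E" and b: "b \<in> E"
  shows "NN L \<mu> (Join L {a,b}) \<sqsubseteq> Join L {NN L \<mu> a, NN L \<mu> b}"
proof -
  define A where "A = {Join L (\<mu> ` S) | S. finite S \<and> S \<subseteq> compl_elems L \<and> a \<sqsubseteq> Join L S}"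
  define B where "B = {Join L (\<mu> ` S) | S. finite S \<and> S \<subseteq> compl_elems L \<and> b \<sqsubseteq> Join L S}"
  have AE: "A \<subseteq> E" and BE: "B \<subseteq> E" unfolding A_def B_def by (rule Xs_sub)+
  have na: "NN L \<mu> a = Meet L A" and nb: "NN L \<mu> b = Meet L B" unfolding A_def B_def NN_def by simp_all
  have mA: "Meet L A \<in> E" using AE Meet_in by blast
  have ab: "Join L {a,b} \<in> E" using a b Join2_in by blast
  have "Join L {Meet L A, Meet L B} = Meet L ((\<lambda>s. Join L {Meet L A, s}) ` B)"
    using mA BE by (rule distrib)
  moreover have "NN L \<mu> (Join L {a,b}) \<sqsubseteq> Join L {Meet L A, s}" if s: "s \<in> B" for s
  proof -
    have sE: "s \<in> E" using s BE by auto
    have "Join L {Meet L A, s} = Join L {s, Meet L A}" by (simp add: insert_commute)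
    also have "\<dots> = Meet L ((\<lambda>t. Join L {s, t}) ` A)" using sE AE by (rule distrib)
    finally have eq: "Join L {Meet L A, s} = Meet L ((\<lambda>t. Join L {s, t}) ` A)" .
    have "NN L \<mu> (Join L {a,b}) \<sqsubseteq> Join L {s, t}" if t: "t \<in> A" for t
    proof -
      obtain S1 where S1: "finite S1" "S1 \<subseteq> compl_elems L" "a \<sqsubseteq> Join L S1" "t = Join L (\<mu> ` S1)"
        using t unfolding A_def by auto
      obtain S2 where S2: "finite S2" "S2 \<subseteq> compl_elems L" "b \<sqsubseteq> Join L S2" "s = Join L (\<mu> ` S2)"
        using s unfolding B_def by auto
      have U: "S1 \<union> S2 \<subseteq> E" using S1 S2 compl_sub by auto
      have "Join L S1 \<sqsubseteq> Join L (S1 \<union> S2)" "Join L S2 \<sqsubseteq> Join L (S1 \<union> S2)"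
        using U by (auto intro: Join_mono_set)
      then have "a \<sqsubseteq> Join L (S1 \<union> S2)" "b \<sqsubseteq> Join L (S1 \<union> S2)"
        using S1 S2 U a b compl_sub by (meson Join_in local.trans le_supE)+
      then have "Join L {a,b} \<sqsubseteq> Join L (S1 \<union> S2)" using a b U by (auto intro: Join2_least Join_in)
      then have 1: "NN L \<mu> (Join L {a,b}) \<sqsubseteq> Join L (\<mu> ` (S1 \<union> S2))"
        using S1 S2 by (intro NN_le) auto
      have tE: "t \<in> E" "s \<in> E" using t AE sE by auto
      have "Join L (\<mu> ` (S1 \<union> S2)) \<sqsubseteq> Join L {s, t}"
      proof (rule Join_least)
        show "\<mu> ` (S1 \<union> S2) \<subseteq> E" using mu by auto
        show "Join L {s, t} \<in> E" using tE Join2_in by auto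
        fix x assume "x \<in> \<mu> ` (S1 \<union> S2)"
        then consider "x \<in> \<mu> ` S1" | "x \<in> \<mu> ` S2" by auto
        then show "x \<sqsubseteq> Join L {s, t}"
        proof cases
          case 1
          then have "x \<sqsubseteq> t" using S1 mu by (auto intro: Join_upper)
          moreover have xE: "x \<in> E" using 1 mu by auto
          ultimately show ?thesis using trans[OF xE tE(1) Join2_in[OF tE(2) tE(1)] _ Join2_u2[OF tE(2) tE(1)]] by blast
        next
          case 2
          then have "x \<sqsubseteq> s" using S2 mu by (auto intro: Join_upper)
          moreover have xE: "x \<in> E" using 2 mu by auto
          ultimately show ?thesis using trans[OF xE tE(2) Join2_in[OF tE(2) tE(1)] _ Join2_u1[OF tE(2) tE(1)]] by blast
        qed
      qed
      then show ?thesis using 1 NN_in tE mu by (meson Join2_in Join_in image_subsetI local.trans)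
    qed
    then show ?thesis unfolding eq using AE sE NN_in
      by (intro Meet_greatest) (auto intro: Join2_in)
  qed
  ultimately show ?thesis unfolding na nb using BE NN_in mA
    by (auto intro!: Meet_greatest Join2_in)
qed

lemma NN_Join_le: "finite S \<Longrightarrow> S \<subseteq> E \<Longrightarrow> NN L \<mu> (Join L S) \<sqsubseteq> Join L (NN L \<mu> ` S)"
proof (induction S rule: finite_induct)
  case empty then show ?case using NN_bot refl bot_in by simp
next
  case (insert x F)
  have x: "x \<in> E" and F: "F \<subseteq> E" using insert by auto
  have JF: "Join L F \<in> E" using F by (rule Join_in)
  have NF: "NN L \<mu> ` F \<subseteq> E" using NN_in by auto
  have JNF: "Join L (NN L \<mu> ` F) \<in> E" using NF by (rule Join_in)
  have e1: "NN L \<mu> (Join L (insert x F)) = NN L \<mu> (Join L {x, Join L F})"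
    using Join_insert[OF x F] by simp
  have s2: "NN L \<mu> (Join L {x, Join L F}) \<sqsubseteq> Join L {NN L \<mu> x, NN L \<mu> (Join L F)}"
    using x JF by (rule NN_join2)
  have ih: "NN L \<mu> (Join L F) \<sqsubseteq> Join L (NN L \<mu> ` F)" using insert F by simp
  have J2: "Join L {NN L \<mu> x, Join L (NN L \<mu> ` F)} \<in> E" using NN_in JNF by (rule Join2_in)
  have s3: "Join L {NN L \<mu> x, NN L \<mu> (Join L F)} \<sqsubseteq> Join L {NN L \<mu> x, Join L (NN L \<mu> ` F)}"
  proof (rule Join2_least[OF NN_in NN_in J2])
    show "NN L \<mu> x \<sqsubseteq> Join L {NN L \<mu> x, Join L (NN L \<mu> ` F)}" using NN_in JNF by (rule Join2_u1)
    show "NN L \<mu> (Join L F) \<sqsubseteq> Join L {NN L \<mu> x, Join L (NN L \<mu> ` F)}"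
      using trans[OF NN_in JNF J2 ih Join2_u2[OF NN_in JNF]] .
  qed
  have e4: "Join L {NN L \<mu> x, Join L (NN L \<mu> ` F)} = Join L (NN L \<mu> ` insert x F)"
    using Join_insert[OF NN_in NF, of x] by simp
  have "NN L \<mu> (Join L (insert x F)) \<sqsubseteq> Join L {NN L \<mu> x, Join L (NN L \<mu> ` F)}"
    unfolding e1 using trans[OF NN_in Join2_in[OF NN_in NN_in] J2 s2 s3] .
  then show ?case unfolding e4 .
qed

lemma NN_Join: assumes "finite S" "S \<subseteq> E" shows "NN L \<mu> (Join L S) = Join L (NN L \<mu> ` S)"
proof (rule antisym)
  show "Join L (NN L \<mu> ` S) \<sqsubseteq> NN L \<mu> (Join L S)"
    using assms NN_in by (intro Join_least) (auto intro!: NN_mono Join_in Join_upper)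
qed (use assms NN_in NN_Join_le in \<open>auto intro: Join_in\<close>)

lemma NN_adherence: "adherence L (NN L \<mu>)"
  unfolding adherence_def
proof (intro conjI ballI allI impI)
  show "NN L \<mu> ` E \<subseteq> E" using NN_in by auto
  show "\<And>x y. x \<in> E \<Longrightarrow> y \<in> E \<Longrightarrow> x \<sqsubseteq> y \<Longrightarrow> NN L \<mu> x \<sqsubseteq> NN L \<mu> y" by (rule NN_mono)
  show "\<And>S. S \<subseteq> compl_elems L \<Longrightarrow> finite S \<Longrightarrow> NN L \<mu> (Join L S) = Join L (NN L \<mu> ` S)"
    using compl_sub NN_Join by blast
  fix l assume l: "l \<in> E"
  define D where "D = {a \<in> compl_elems L. l \<sqsubseteq> a}"
  have DE: "NN L \<mu> ` D \<subseteq> E" using NN_in by auto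
  show "NN L \<mu> l = Meet L (NN L \<mu> ` D)"
  proof (rule antisym)
    show "NN L \<mu> l \<sqsubseteq> Meet L (NN L \<mu> ` D)"
      using DE NN_in l compl_sub unfolding D_def by (auto intro!: Meet_greatest NN_mono)
    show "Meet L (NN L \<mu> ` D) \<sqsubseteq> NN L \<mu> l"
    proof (rule NN_greatest)
      show "Meet L (NN L \<mu> ` D) \<in> E" using DE Meet_in by blast
      fix S assume S: "finite S" "S \<subseteq> compl_elems L" "l \<sqsubseteq> Join L S"
      then have JD: "Join L S \<in> D" unfolding D_def using compl_Join by auto
      have JE: "Join L S \<in> E" using JD D_def compl_sub by auto
      have 1: "Meet L (NN L \<mu> ` D) \<sqsubseteq> NN L \<mu> (Join L S)" using DE JD by (auto intro: Meet_lower)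
      have 2: "NN L \<mu> (Join L S) \<sqsubseteq> Join L (\<mu> ` S)" using S JE by (intro NN_le) (auto intro: refl)
      have 3: "Join L (\<mu> ` S) \<in> E" using mu by (intro Join_in) auto
      show "Meet L (NN L \<mu> ` D) \<sqsubseteq> Join L (\<mu> ` S)"
        using trans[OF Meet_in[OF DE] NN_in 3 1 2] .
    qed
  qed (use DE NN_in Meet_in in auto)
qed

end
end

context cf begin
lemma adh_in: "adherence L \<nu> \<Longrightarrow> x \<in> E \<Longrightarrow> \<nu> x \<in> E" unfolding adherence_def by (elim conjE) blast
lemma adh_mono: "adherence L \<nu> \<Longrightarrow> x \<in> E \<Longrightarrow> y \<in> E \<Longrightarrow> x \<sqsubseteq> y \<Longrightarrow> \<nu> x \<sqsubseteq> \<nu> y"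
  unfolding adherence_def by (elim conjE) blast
lemma adh_join: "adherence L \<nu> \<Longrightarrow> S \<subseteq> compl_elems L \<Longrightarrow> finite S \<Longrightarrow> \<nu> (Join L S) = Join L (\<nu> ` S)"
  unfolding adherence_def by (elim conjE) blast
lemma adh_inf: "adherence L \<nu> \<Longrightarrow> l \<in> E \<Longrightarrow> \<nu> l = Meet L (\<nu> ` {a \<in> compl_elems L. l \<sqsubseteq> a})"
  unfolding adherence_def by (elim conjE) blast
lemma ladj_id: "l \<in> E \<Longrightarrow> ladj L L id l = l"
  unfolding ladj_def
  by (rule antisym) (auto intro!: Meet_lower Meet_greatest Meet_in refl)
end

locale hom = fixes L L' :: "'a lat" and f :: "'a \<Rightarrow> 'a" assumes h: "coframe_hom L L' f"
begin
lemma H1: "coframe L" using h[unfolded coframe_hom_def, THEN conjunct1] .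
lemma H2: "coframe L'" using h[unfolded coframe_hom_def, THEN conjunct2, THEN conjunct1] .
lemma H3: "f ` elems L \<subseteq> elems L'" using h[unfolded coframe_hom_def, THEN conjunct2, THEN conjunct2, THEN conjunct1] .
lemma H4: "\<forall>S. S \<subseteq> elems L \<longrightarrow> f (Meet L S) = Meet L' (f ` S)"
  using h[unfolded coframe_hom_def, THEN conjunct2, THEN conjunct2, THEN conjunct2, THEN conjunct1] .
lemma H5: "\<forall>S. S \<subseteq> elems L \<longrightarrow> finite S \<longrightarrow> f (Join L S) = Join L' (f ` S)"
  using h[unfolded coframe_hom_def, THEN conjunct2, THEN conjunct2, THEN conjunct2, THEN conjunct2] .
sublocale src: cf L using H1 by (rule cf.intro)
sublocale tgt: cf L' using H2 by (rule cf.intro)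

lemma f_in: "x \<in> elems L \<Longrightarrow> f x \<in> elems L'" using H3 by blast
lemma f_Meet: "S \<subseteq> elems L \<Longrightarrow> f (Meet L S) = Meet L' (f ` S)" using H4 by blast
lemma f_Join: "S \<subseteq> elems L \<Longrightarrow> finite S \<Longrightarrow> f (Join L S) = Join L' (f ` S)" using H5 by blast

lemma f_mono: assumes "x \<in> elems L" "y \<in> elems L" "leq L x y" shows "leq L' (f x) (f y)"
proof -
  have "f x = f (Meet L {x,y})" using src.Meet2_eq assms by simp
  also have "\<dots> = Meet L' {f x, f y}" using assms f_Meet[of "{x,y}"] by simp
  finally show ?thesis using tgt.Meet2_l2 f_in assms by metis
qed

lemma f_compl: assumes "a \<in> compl_elems L" shows "f a \<in> compl_elems L'"
proof -
  obtain b where b: "a \<in> elems L" "b \<in> elems L" "Meet L {a,b} = Join L {}" "Join L {a,b} = Meet L {}"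
    using assms unfolding compl_elems_def by auto
  have "Meet L' {f a, f b} = f (Meet L {a,b})" using f_Meet[of "{a,b}"] b by simp
  also have "\<dots> = Join L' {}" using b f_Join[of "{}"] by simp
  finally have 1: "Meet L' {f a, f b} = Join L' {}" .
  have "Join L' {f a, f b} = f (Join L {a,b})" using f_Join[of "{a,b}"] b by simp
  also have "\<dots> = Meet L' {}" using b f_Meet[of "{}"] by simp
  finally have 2: "Join L' {f a, f b} = Meet L' {}" .
  show ?thesis unfolding compl_elems_def using 1 2 b f_in by auto
qed

lemma ladj_set: "{l \<in> elems L. leq L' l' (f l)} \<subseteq> elems L" by auto

lemma ladj_in: "ladj L L' f l' \<in> elems L" unfolding ladj_def using ladj_set by (rule src.Meet_in)

lemma unit: assumes "l' \<in> elems L'" shows "leq L' l' (f (ladj L L' f l'))"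
proof -
  have "f (ladj L L' f l') = Meet L' (f ` {l \<in> elems L. leq L' l' (f l)})"
    unfolding ladj_def using ladj_set by (rule f_Meet)
  moreover have "leq L' l' (Meet L' (f ` {l \<in> elems L. leq L' l' (f l)}))"
    using assms f_in by (intro tgt.Meet_greatest) auto
  ultimately show ?thesis by simp
qed

lemma ladj_le: "l \<in> elems L \<Longrightarrow> leq L' l' (f l) \<Longrightarrow> leq L (ladj L L' f l') l"
  unfolding ladj_def by (rule src.Meet_lower[OF ladj_set]) auto

lemma counit: "l \<in> elems L \<Longrightarrow> leq L (ladj L L' f (f l)) l"
  using ladj_le f_in tgt.refl by blast

lemma ladj_mono: assumes "l1 \<in> elems L'" "l2 \<in> elems L'" "leq L' l1 l2"
  shows "leq L (ladj L L' f l1) (ladj L L' f l2)"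
proof (rule ladj_le[OF ladj_in])
  show "leq L' l1 (f (ladj L L' f l2))"
    using tgt.trans[OF assms(1) assms(2) f_in[OF ladj_in] assms(3) unit[OF assms(2)]] .
qed
end

lemma ladj_comp:
  assumes f: "coframe_hom L M f" and g: "coframe_hom M N g" and n: "n \<in> elems N"
  shows "ladj L N (g \<circ> f) n = ladj L M f (ladj M N g n)"
proof -
  interpret F: hom L M f by (rule hom.intro) (rule f)
  interpret G: hom M N g by (rule hom.intro) (rule g)
  have "{l \<in> elems L. leq N n ((g \<circ> f) l)} = {l \<in> elems L. leq M (ladj M N g n) (f l)}"
  proof (intro Collect_cong conj_cong refl iffI)
    fix l assume l: "l \<in> elems L"
    { assume "leq N n ((g \<circ> f) l)"
      then show "leq M (ladj M N g n) (f l)" using G.ladj_le F.f_in l by simp }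
    { assume a: "leq M (ladj M N g n) (f l)"
      have "leq N (g (ladj M N g n)) (g (f l))" using G.f_mono[OF G.ladj_in F.f_in[OF l] a] .
      then show "leq N n ((g \<circ> f) l)"
        using G.tgt.trans[OF n G.f_in[OF G.ladj_in] G.f_in[OF F.f_in[OF l]] G.unit[OF n]] by simp }
  qed
  then show ?thesis unfolding ladj_def by simp
qed


theorem mainTheorem12:
  fixes Ob :: "'a lat set" and Hom :: "'a lat \<Rightarrow> 'a lat \<Rightarrow> ('a \<Rightarrow> 'a) \<Rightarrow> bool"
    and I :: "'i set" and Ls :: "'i \<Rightarrow> 'a lat" and \<nu>s :: "'i \<Rightarrow> 'a \<Rightarrow> 'a"
    and \<phi> :: "'i \<Rightarrow> 'a \<Rightarrow> 'a" and L :: "'a lat"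
  assumes "coframe_category Ob Hom"
    and "L \<in> Ob"
    and "\<forall>i\<in>I. Ls i \<in> Ob \<and> adherence (Ls i) (\<nu>s i) \<and> Hom (Ls i) L (\<phi> i)"
  shows "is_final_lift Ob Hom I Ls \<nu>s \<phi> L (sink_adh I Ls \<nu>s \<phi> L)
    \<and> (\<forall>\<nu>. is_final_lift Ob Hom I Ls \<nu>s \<phi> L \<nu> \<longrightarrow>
           (\<forall>l\<in>elems L. \<nu> l = sink_adh I Ls \<nu>s \<phi> L l))"
proof -
  have cat1: "\<forall>L\<in>Ob. coframe L" using assms(1)[unfolded coframe_category_def, THEN conjunct1] .
  have cat2: "\<And>L L' f. Hom L L' f \<Longrightarrow> coframe_hom L L' f"
    using assms(1)[unfolded coframe_category_def, THEN conjunct2, THEN conjunct1] by blast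
  have cat3: "Hom L L id" using assms(1)[unfolded coframe_category_def, THEN conjunct2, THEN conjunct2, THEN conjunct1] assms(2) by blast
  have cat4: "\<And>L M N f g. Hom L M f \<Longrightarrow> Hom M N g \<Longrightarrow> Hom L N (g \<circ> f)"
    using assms(1)[unfolded coframe_category_def, THEN conjunct2, THEN conjunct2, THEN conjunct2] by blast
  interpret cf L using cat1 assms(2) by (intro cf.intro) blast
  have hi: "\<And>i. i \<in> I \<Longrightarrow> hom (Ls i) L (\<phi> i)" using assms(3) cat2 hom.intro by blast
  have adhi: "\<And>i. i \<in> I \<Longrightarrow> adherence (Ls i) (\<nu>s i)" using assms(3) by blast
  define \<mu> where "\<mu> a = Meet L ((\<lambda>i. \<phi> i (\<nu>s i (ladj (Ls i) L (\<phi> i) a))) ` I)" for a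
  have terms_in: "\<phi> i (\<nu>s i (ladj (Ls i) L (\<phi> i) a)) \<in> E" if "i \<in> I" for i a
  proof -
    interpret H: hom "Ls i" L "\<phi> i" using hi[OF that] .
    show ?thesis using H.f_in H.src.adh_in[OF adhi[OF that] H.ladj_in] .
  qed
  have mu_in: "\<mu> a \<in> E" for a unfolding \<mu>_def using terms_in by (intro Meet_in) auto
  have sink_eq: "sink_adh I Ls \<nu>s \<phi> L = NN L \<mu>"
    unfolding sink_adh_def NN_def \<mu>_def by (rule ext) simp
  let ?N = "NN L \<mu>"
  have N_adh: "adherence L ?N" using mu_in by (rule NN_adherence)
  have N_in: "?N x \<in> E" for x using mu_in by (rule NN_in)

  have cont: "continuous_adh (Ls i) (\<nu>s i) L ?N (\<phi> i)" if i: "i \<in> I" for i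
    unfolding continuous_adh_def
  proof
    interpret H: hom "Ls i" L "\<phi> i" using hi[OF i] .
    fix l assume l: "l \<in> E"
    define m where "m = ladj (Ls i) L (\<phi> i) l"
    have m: "m \<in> elems (Ls i)" unfolding m_def by (rule H.ladj_in)
    define D where "D = {b \<in> compl_elems (Ls i). leq (Ls i) m b}"
    have DE: "\<nu>s i ` D \<subseteq> elems (Ls i)"
      using H.src.adh_in[OF adhi[OF i]] H.src.compl_sub unfolding D_def by auto
    have "\<phi> i (\<nu>s i m) = \<phi> i (Meet (Ls i) (\<nu>s i ` D))"
      unfolding D_def using H.src.adh_inf[OF adhi[OF i] m] by simp
    also have "\<dots> = Meet L (\<phi> i ` \<nu>s i ` D)" using DE by (rule H.f_Meet)
    finally have eq: "\<phi> i (\<nu>s i m) = Meet L (\<phi> i ` \<nu>s i ` D)" .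
    have "?N l \<sqsubseteq> Meet L (\<phi> i ` \<nu>s i ` D)"
    proof (rule Meet_greatest)
      show "\<phi> i ` \<nu>s i ` D \<subseteq> E" using DE H.f_in by auto
      show "?N l \<in> E" by (rule N_in)
      fix x assume "x \<in> \<phi> i ` \<nu>s i ` D"
      then obtain b where b: "b \<in> D" and x: "x = \<phi> i (\<nu>s i b)" by auto
      have bC: "b \<in> compl_elems (Ls i)" and mb: "leq (Ls i) m b" using b unfolding D_def by auto
      have bE: "b \<in> elems (Ls i)" using bC H.src.compl_sub by auto
      have fbC: "\<phi> i b \<in> compl_elems L" using bC by (rule H.f_compl)
      have fbE: "\<phi> i b \<in> E" using bE by (rule H.f_in)
      have "l \<sqsubseteq> \<phi> i m" unfolding m_def using l by (rule H.unit)
      moreover have "\<phi> i m \<sqsubseteq> \<phi> i b" using m bE mb by (rule H.f_mono)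
      ultimately have "l \<sqsubseteq> \<phi> i b" using trans[OF l H.f_in[OF m] fbE] by blast
      then have "l \<sqsubseteq> Join L {\<phi> i b}" using Join_single[OF fbE] by simp
      then have 1: "?N l \<sqsubseteq> Join L (\<mu> ` {\<phi> i b})" using fbC mu_in by (intro NN_le) auto
      have 2: "Join L (\<mu> ` {\<phi> i b}) = \<mu> (\<phi> i b)" using Join_single[OF mu_in] by simp
      have 3: "\<mu> (\<phi> i b) \<sqsubseteq> \<phi> i (\<nu>s i (ladj (Ls i) L (\<phi> i) (\<phi> i b)))"
        unfolding \<mu>_def using terms_in i by (intro Meet_lower) auto
      have "leq (Ls i) (ladj (Ls i) L (\<phi> i) (\<phi> i b)) b" using bE by (rule H.counit)
      then have "leq (Ls i) (\<nu>s i (ladj (Ls i) L (\<phi> i) (\<phi> i b))) (\<nu>s i b)"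
        using H.src.adh_mono[OF adhi[OF i] H.ladj_in bE] by blast
      then have 4: "\<phi> i (\<nu>s i (ladj (Ls i) L (\<phi> i) (\<phi> i b))) \<sqsubseteq> \<phi> i (\<nu>s i b)"
        using H.f_mono H.src.adh_in[OF adhi[OF i]] H.ladj_in bE by blast
      have "?N l \<sqsubseteq> \<mu> (\<phi> i b)" using 1 2 by simp
      then have "?N l \<sqsubseteq> \<phi> i (\<nu>s i (ladj (Ls i) L (\<phi> i) (\<phi> i b)))"
        using trans[OF N_in mu_in terms_in[OF i] _ 3] by blast
      then show "?N l \<sqsubseteq> x" unfolding x
        using trans[OF N_in terms_in[OF i] H.f_in[OF H.src.adh_in[OF adhi[OF i] bE]] _ 4] by blast
    qed
    then show "?N l \<sqsubseteq> \<phi> i (\<nu>s i (ladj (Ls i) L (\<phi> i) l))" using eq unfolding m_def by simp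
  qed

  have final: "continuous_adh L ?N L' \<nu>' \<psi> \<longleftrightarrow> (\<forall>i\<in>I. continuous_adh (Ls i) (\<nu>s i) L' \<nu>' (\<psi> \<circ> \<phi> i))"
    if L': "L' \<in> Ob" and adh': "adherence L' \<nu>'" and hp: "Hom L L' \<psi>" for L' \<nu>' \<psi>
  proof
    interpret P: hom L L' \<psi> using cat2[OF hp] by (rule hom.intro)
    {
      assume cp: "continuous_adh L ?N L' \<nu>' \<psi>"
      show "\<forall>i\<in>I. continuous_adh (Ls i) (\<nu>s i) L' \<nu>' (\<psi> \<circ> \<phi> i)"
        unfolding continuous_adh_def
      proof (intro ballI)
        fix i l' assume i: "i \<in> I" and l': "l' \<in> elems L'"
        interpret H: hom "Ls i" L "\<phi> i" using hi[OF i] .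
        define k where "k = ladj L L' \<psi> l'"
        have k: "k \<in> E" unfolding k_def by (rule P.ladj_in)
        have 1: "leq L' (\<nu>' l') (\<psi> (?N k))" using cp l' unfolding continuous_adh_def k_def by blast
        have 2: "?N k \<sqsubseteq> \<phi> i (\<nu>s i (ladj (Ls i) L (\<phi> i) k))"
          using cont[OF i] k unfolding continuous_adh_def by blast
        have 3: "leq L' (\<psi> (?N k)) (\<psi> (\<phi> i (\<nu>s i (ladj (Ls i) L (\<phi> i) k))))"
          using P.f_mono[OF N_in terms_in[OF i] 2] .
        have eq: "ladj (Ls i) L' (\<psi> \<circ> \<phi> i) l' = ladj (Ls i) L (\<phi> i) k"
          unfolding k_def using ladj_comp[OF H.h P.h l'] .
        show "leq L' (\<nu>' l') ((\<psi> \<circ> \<phi> i) (\<nu>s i (ladj (Ls i) L' (\<psi> \<circ> \<phi> i) l')))"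
          unfolding eq using P.tgt.trans[OF P.tgt.adh_in[OF adh' l'] P.f_in[OF N_in] P.f_in[OF terms_in[OF i]] 1 3]
          by simp
      qed
    }
    {
      assume ca: "\<forall>i\<in>I. continuous_adh (Ls i) (\<nu>s i) L' \<nu>' (\<psi> \<circ> \<phi> i)"
      show "continuous_adh L ?N L' \<nu>' \<psi>"
        unfolding continuous_adh_def
      proof
        fix l' assume l': "l' \<in> elems L'"
        have nl': "\<nu>' l' \<in> elems L'" using P.tgt.adh_in[OF adh' l'] .
        define m where "m = ladj L L' \<psi> l'"
        have m: "m \<in> E" unfolding m_def by (rule P.ladj_in)
        define X where "X = {Join L (\<mu> ` S) | S. finite S \<and> S \<subseteq> compl_elems L \<and> m \<sqsubseteq> Join L S}"
        have XE: "X \<subseteq> E" unfolding X_def using mu_in by (rule Xs_sub)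
        have "\<psi> (?N m) = Meet L' (\<psi> ` X)" unfolding NN_def X_def[symmetric] using XE by (rule P.f_Meet)
        moreover have "leq L' (\<nu>' l') (Meet L' (\<psi> ` X))"
        proof (rule P.tgt.Meet_greatest)
          show "\<psi> ` X \<subseteq> elems L'" using XE P.f_in by auto
          show "\<nu>' l' \<in> elems L'" by (rule nl')
          fix y assume "y \<in> \<psi> ` X"
          then obtain S where S: "finite S" "S \<subseteq> compl_elems L" "m \<sqsubseteq> Join L S" and y: "y = \<psi> (Join L (\<mu> ` S))"
            unfolding X_def by auto
          have SE: "S \<subseteq> E" using S compl_sub by auto
          have JS: "Join L S \<in> E" using SE by (rule Join_in)
          have muS: "\<mu> ` S \<subseteq> E" using mu_in by auto
          have y': "y = Join L' (\<psi> ` \<mu> ` S)" unfolding y using muS S(1) by (intro P.f_Join) auto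
          have pS: "\<psi> ` S \<subseteq> compl_elems L'" using S P.f_compl by auto
          have pSE: "\<psi> ` S \<subseteq> elems L'" using pS P.tgt.compl_sub by auto
          have pJ: "\<psi> (Join L S) = Join L' (\<psi> ` S)" using SE S(1) by (rule P.f_Join)
          have "leq L' l' (\<psi> m)" unfolding m_def using l' by (rule P.unit)
          moreover have "leq L' (\<psi> m) (\<psi> (Join L S))" using m JS S(3) by (rule P.f_mono)
          ultimately have "leq L' l' (Join L' (\<psi> ` S))"
            using P.tgt.trans[OF l' P.f_in[OF m] P.f_in[OF JS]] pJ by simp
          then have "leq L' (\<nu>' l') (\<nu>' (Join L' (\<psi> ` S)))"
            using P.tgt.adh_mono[OF adh' l' P.tgt.Join_in[OF pSE]] by blast
          also have "\<nu>' (Join L' (\<psi> ` S)) = Join L' (\<nu>' ` \<psi> ` S)"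
            using P.tgt.adh_join[OF adh' pS] S(1) by simp
          finally have 1: "leq L' (\<nu>' l') (Join L' (\<nu>' ` \<psi> ` S))" .
          have yE: "y \<in> elems L'" unfolding y using P.f_in Join_in[OF muS] by blast
          have 2: "leq L' (Join L' (\<nu>' ` \<psi> ` S)) y"
          proof (rule P.tgt.Join_least)
            show "\<nu>' ` \<psi> ` S \<subseteq> elems L'" using P.tgt.adh_in[OF adh'] pSE by auto
            show "y \<in> elems L'" by (rule yE)
            fix z assume "z \<in> \<nu>' ` \<psi> ` S"
            then obtain a where a: "a \<in> S" and z: "z = \<nu>' (\<psi> a)" by auto
            have aE: "a \<in> E" using a SE by auto
            have zE: "z \<in> elems L'" unfolding z using P.tgt.adh_in[OF adh' P.f_in[OF aE]] .
            have pmu: "\<psi> (\<mu> a) = Meet L' (\<psi> ` (\<lambda>i. \<phi> i (\<nu>s i (ladj (Ls i) L (\<phi> i) a))) ` I)"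
              unfolding \<mu>_def using terms_in by (intro P.f_Meet) auto
            have "leq L' z (\<psi> (\<mu> a))"
              unfolding pmu
            proof (rule P.tgt.Meet_greatest)
              show "\<psi> ` (\<lambda>i. \<phi> i (\<nu>s i (ladj (Ls i) L (\<phi> i) a))) ` I \<subseteq> elems L'"
                using terms_in P.f_in by auto
              show "z \<in> elems L'" by (rule zE)
              fix w assume "w \<in> \<psi> ` (\<lambda>i. \<phi> i (\<nu>s i (ladj (Ls i) L (\<phi> i) a))) ` I"
              then obtain i where i: "i \<in> I" and w: "w = \<psi> (\<phi> i (\<nu>s i (ladj (Ls i) L (\<phi> i) a)))" by auto
              interpret H: hom "Ls i" L "\<phi> i" using hi[OF i] .
              have pa: "\<psi> a \<in> elems L'" using aE by (rule P.f_in)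
              have c1: "leq L' z ((\<psi> \<circ> \<phi> i) (\<nu>s i (ladj (Ls i) L' (\<psi> \<circ> \<phi> i) (\<psi> a))))"
                using ca i pa unfolding continuous_adh_def z by blast
              have eq: "ladj (Ls i) L' (\<psi> \<circ> \<phi> i) (\<psi> a) = ladj (Ls i) L (\<phi> i) (ladj L L' \<psi> (\<psi> a))"
                using ladj_comp[OF H.h P.h pa] .
              have "ladj L L' \<psi> (\<psi> a) \<sqsubseteq> a" using aE by (rule P.counit)
              then have "leq (Ls i) (ladj (Ls i) L (\<phi> i) (ladj L L' \<psi> (\<psi> a))) (ladj (Ls i) L (\<phi> i) a)"
                using H.ladj_mono[OF P.ladj_in aE] by blast
              then have "leq (Ls i) (\<nu>s i (ladj (Ls i) L (\<phi> i) (ladj L L' \<psi> (\<psi> a)))) (\<nu>s i (ladj (Ls i) L (\<phi> i) a))"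
                using H.src.adh_mono[OF adhi[OF i] H.ladj_in H.ladj_in] by blast
              then have "\<phi> i (\<nu>s i (ladj (Ls i) L (\<phi> i) (ladj L L' \<psi> (\<psi> a)))) \<sqsubseteq> \<phi> i (\<nu>s i (ladj (Ls i) L (\<phi> i) a))"
                using H.f_mono H.src.adh_in[OF adhi[OF i]] H.ladj_in by blast
              then have c2: "leq L' (\<psi> (\<phi> i (\<nu>s i (ladj (Ls i) L (\<phi> i) (ladj L L' \<psi> (\<psi> a)))))) w"
                unfolding w using P.f_mono terms_in[OF i] by blast
              have wE: "w \<in> elems L'" unfolding w using P.f_in[OF terms_in[OF i]] .
              have c1': "leq L' z (\<psi> (\<phi> i (\<nu>s i (ladj (Ls i) L (\<phi> i) (ladj L L' \<psi> (\<psi> a))))))"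
                using c1 eq by simp
              show "leq L' z w"
                using P.tgt.trans[OF zE P.f_in[OF terms_in[OF i, of "ladj L L' \<psi> (\<psi> a)"]] wE c1' c2] .
            qed
            moreover have "leq L' (\<psi> (\<mu> a)) y"
              unfolding y' using P.f_in[OF mu_in] a muS
              by (intro P.tgt.Join_upper) auto
            ultimately show "leq L' z y"
              using P.tgt.trans[OF zE P.f_in[OF mu_in] yE] by blast
          qed
          show "leq L' (\<nu>' l') y"
            using P.tgt.trans[OF nl' P.tgt.Join_in yE 1 2] P.tgt.adh_in[OF adh'] pSE by auto
        qed
        ultimately show "leq L' (\<nu>' l') (\<psi> (?N (ladj L L' \<psi> l')))" unfolding m_def by simp
      qed
    }
  qed

  have fl: "is_final_lift Ob Hom I Ls \<nu>s \<phi> L ?N"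
    unfolding is_final_lift_def is_lift_def using N_adh cont final by blast

  show ?thesis unfolding sink_eq
  proof (intro conjI allI impI ballI)
    show "is_final_lift Ob Hom I Ls \<nu>s \<phi> L ?N" by (rule fl)
    fix \<nu> l assume fn: "is_final_lift Ob Hom I Ls \<nu>s \<phi> L \<nu>" and l: "l \<in> E"
    have adhn: "adherence L \<nu>" and contn: "\<forall>i\<in>I. continuous_adh (Ls i) (\<nu>s i) L \<nu> (\<phi> i)"
      using fn unfolding is_final_lift_def is_lift_def by blast+
    have fin: "\<forall>L'\<in>Ob. \<forall>\<nu>'. adherence L' \<nu>' \<longrightarrow> (\<forall>\<psi>. Hom L L' \<psi> \<longrightarrow>
        (continuous_adh L \<nu> L' \<nu>' \<psi> \<longleftrightarrow>
         (\<forall>i\<in>I. continuous_adh (Ls i) (\<nu>s i) L' \<nu>' (\<psi> \<circ> \<phi> i))))"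
      using fn unfolding is_final_lift_def by blast
    have c1: "continuous_adh L \<nu> L ?N id"
      using fin assms(2) N_adh cat3 cont by simp
    have c2: "continuous_adh L ?N L \<nu> id"
      using final[OF assms(2) adhn cat3] contn by simp
    have "?N l \<sqsubseteq> \<nu> l" using c1 l ladj_id[OF l] unfolding continuous_adh_def by force
    moreover have "\<nu> l \<sqsubseteq> ?N l" using c2 l ladj_id[OF l] unfolding continuous_adh_def by force
    ultimately show "\<nu> l = ?N l" using antisym N_in adh_in[OF adhn l] by blast
  qed
qed

end
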